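(* Let $\alpha,\tau\in C^{\log}_{\mathrm{loc}}$ with $\tau^-\ge0$, let $p,q\in\mathcal{P}^{\log}_0$ with $0<q^+<\infty$. There exists $c>0$ such that for all $\lambda\in\mathfrak{b}^{\alpha(\cdot),\tau(\cdot)}_{p(\cdot),q(\cdot)}$, all $v\in\mathbb{N}_0$, $m\in\mathbb{Z}^n$ and $x\in Q_{v,m}$, $$|\lambda_{v,m}|\le c\,2^{-v(\alpha(x)+\frac n2)}|Q_{v,m}|^{\tau(x)}\,\|\lambda\|_{\mathfrak{b}^{\alpha(\cdot),\tau(\cdot)}_{p(\cdot),q(\cdot)}}\,\|\chi_{v,m}\|_{p(\cdot)}^{-1}.$$
   Context: $g^\pm$: essential sup/inf. $\mathcal{P}_0$: measurable $p:\mathbb{R}^n\to(0,\infty)$ with $p^->0$. $g\in C^{\log}_{\mathrm{loc}}$: $|g(x)-g(y)|\le c/\log(e+1/|x-y|)$; $g\in C^{\log}$: additionally $|g(x)-g_\infty|\le c/\log(e+|x|)$. $\mathcal{P}_0^{\log}=\{p\in\mathcal{P}_0:1/p\in C^{\log}\}$. $\|f\|_{p(\cdot)}=\inf\{\lambda>0:\int|f/\lambda|^{p(x)}dx\le1\}$; $\|(f_v)\|_{\ell^{q(\cdot)}(L^{p(\cdot)})}=\inf\{\mu>0:\sum_v\inf\{\lambda_v>0:\int|f_v(x)/(\mu\lambda_v^{1/q(x)})|^{p(x)}dx\le1\}\le1\}$. Dyadic cubes $Q_{v,m}=\{x:m_i\le2^vx_i<m_i+1\}$, $\chi_{v,m}=\chi_{Q_{v,m}}$,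 $\mathcal{Q}$ the set of dyadic cubes, $v_P=-\log_2l(P)$, $v_P^+=\max(v_P,0)$. For complex sequences $\lambda=\{\lambda_{v,m}:v\in\mathbb{N}_0,m\in\mathbb{Z}^n\}$, $\|\lambda\|_{\mathfrak{b}^{\alpha(\cdot),\tau(\cdot)}_{p(\cdot),q(\cdot)}}=\sup_{P\in\mathcal{Q}}\Big\|\Big(|P|^{-\tau(\cdot)}\chi_P\sum_{m\in\mathbb{Z}^n}2^{v(\alpha(\cdot)+n/2)}\lambda_{v,m}\chi_{v,m}\Big)_{v\ge v_P^+}\Big\|_{\ell^{q(\cdot)}(L^{p(\cdot)})}$ and $\mathfrak{b}^{\alpha(\cdot),\tau(\cdot)}_{p(\cdot),q(\cdot)}$ is the set of $\lambda$ where this is finite. *)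

theory Defs
  imports "HOL-Analysis.Analysis" "HOL-Probability.Essential_Supremum"
begin

definition ess_sup :: "(real^'n \<Rightarrow> real) \<Rightarrow> ereal" where
  "ess_sup g = esssup lebesgue (\<lambda>x. ereal (g x))"

definition ess_inf :: "(real^'n \<Rightarrow> real) \<Rightarrow> ereal" where
  "ess_inf g = - esssup lebesgue (\<lambda>x. - ereal (g x))"

definition C_log_loc :: "(real^'n \<Rightarrow> real) \<Rightarrow> bool" where
  "C_log_loc g \<longleftrightarrow> (\<exists>c. \<forall>x y. x \<noteq> y \<longrightarrow>
      \<bar>g x - g y\<bar> \<le> c / ln (exp 1 + 1 / norm (x - y)))"

definition C_log :: "(real^'n \<Rightarrow> real) \<Rightarrow> bool" where
  "C_log g \<longleftrightarrow> C_log_loc g \<and> (\<exists>c g_inf. \<forall>x.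
      \<bar>g x - g_inf\<bar> \<le> c / ln (exp 1 + norm x))"

definition P0 :: "(real^'n \<Rightarrow> real) \<Rightarrow> bool" where
  "P0 p \<longleftrightarrow> p \<in> borel_measurable lebesgue \<and> (\<forall>x. 0 < p x) \<and> ess_inf p > 0"

definition P0_log :: "(real^'n \<Rightarrow> real) \<Rightarrow> bool" where
  "P0_log p \<longleftrightarrow> P0 p \<and> C_log (\<lambda>x. 1 / p x)"

definition dcube :: "int \<Rightarrow> int^'n \<Rightarrow> (real^'n) set" where
  "dcube k m = {x. \<forall>i. real_of_int (m$i) \<le> 2 powr k * x$i \<and> 2 powr k * x$i < real_of_int (m$i) + 1}"

text \<open>Variable exponent Lebesgue (quasi-)norm; value \<infinity> if no admissible lambda exists.\<close>
definition Lp_var_norm :: "(real^'n \<Rightarrow> real) \<Rightarrow> (real^'n \<Rightarrow> 'b::real_normed_vector) \<Rightarrow> ennreal" where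
  "Lp_var_norm p f = Inf {ennreal l | l. 0 < l \<and>
      (\<integral>\<^sup>+ x. ennreal ((norm (f x) / l) powr p x) \<partial>lebesgue) \<le> 1}"

definition lq_Lp_norm :: "(real^'n \<Rightarrow> real) \<Rightarrow> (real^'n \<Rightarrow> real) \<Rightarrow> (nat \<Rightarrow> real^'n \<Rightarrow> 'b::real_normed_vector) \<Rightarrow> ennreal" where
  "lq_Lp_norm p q f = Inf {ennreal \<mu> | \<mu>. 0 < \<mu> \<and>
      (\<Sum>v. Inf {ennreal l | l. 0 < l \<and>
          (\<integral>\<^sup>+ x. ennreal ((norm (f v x) / (\<mu> * l powr (1 / q x))) powr p x) \<partial>lebesgue) \<le> 1}) \<le> 1}"

text \<open>The supremum ranges over all
  dyadic cubes P = Q_{k,m} (k \<in> Z, so v_P = k); the sequence is indexed by v \<ge> v_P^+ = nat k,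
  the terms with v < v_P^+ being set to 0 (they contribute nothing to the mixed norm).\<close>
definition b_norm :: "(real^'n \<Rightarrow> real) \<Rightarrow> (real^'n \<Rightarrow> real) \<Rightarrow> (real^'n \<Rightarrow> real) \<Rightarrow> (real^'n \<Rightarrow> real)
      \<Rightarrow> (nat \<Rightarrow> int^'n \<Rightarrow> complex) \<Rightarrow> ennreal" where
  "b_norm \<alpha> \<tau> p q lam = (SUP (k, mP) \<in> (UNIV :: (int \<times> (int^'n)) set).
      lq_Lp_norm p q (\<lambda>v x. if nat k \<le> v then
         complex_of_real (measure lebesgue (dcube k mP) powr (- \<tau> x) * indicator (dcube k mP) x) *
         (\<Sum>\<^sub>\<infinity> m. complex_of_real (2 powr (real v * (\<alpha> x + real CARD('n) / 2)) *
                indicator (dcube (int v) m) x) * lam v m)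
       else 0))"

definition b_space :: "(real^'n \<Rightarrow> real) \<Rightarrow> (real^'n \<Rightarrow> real) \<Rightarrow> (real^'n \<Rightarrow> real) \<Rightarrow> (real^'n \<Rightarrow> real)
      \<Rightarrow> (nat \<Rightarrow> int^'n \<Rightarrow> complex) set" where
  "b_space \<alpha> \<tau> p q = {lam. b_norm \<alpha> \<tau> p q lam < \<infinity>}"

end

theory Submission imports Defs begin

lemma log_bound:
  fixes d :: real and N :: nat and v :: nat
  assumes "0 < d" "d \<le> real N * 2 powr (- real v)" "1 \<le> N"
  shows "real v / ln (exp 1 + 1 / d) \<le> 2 / ln 2 * (1 + ln (real N))"
proof -
  have N0: "0 < real N" using assms by simp
  have "real N * 2 powr (- real v) > 0" using N0 by simp
  have inv: "2 powr real v / real N \<le> 1 / d"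
  proof -
    have "1 / d \<ge> 1 / (real N * 2 powr (- real v))"
      using assms by (intro divide_left_mono) auto
    also have "1 / (real N * 2 powr (- real v)) = 2 powr real v / real N"
      by (simp add: powr_minus field_simps)
    finally show ?thesis .
  qed
  define L where "L = ln (exp 1 + 1 / d)"
  have L1: "1 \<le> L"
  proof -
    have "exp 1 \<le> exp 1 + 1 / d" using assms by simp
    hence "ln (exp 1) \<le> L" unfolding L_def using assms by (subst ln_le_cancel_iff) (auto intro!: add_pos_nonneg)
    thus ?thesis by simp
  qed
  have L2: "real v * ln 2 - ln (real N) \<le> L"
  proof -
    have "2 powr real v / real N \<le> exp 1 + 1 / d" using inv by (smt (verit) exp_gt_zero)
    hence "ln (2 powr real v / real N) \<le> L" unfolding L_def
      using N0 assms by (subst ln_le_cancel_iff) (auto intro!: add_pos_nonneg)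
    moreover have "ln (2 powr real v / real N) = real v * ln 2 - ln (real N)"
      using N0 by (simp add: ln_div ln_powr)
    ultimately show ?thesis by simp
  qed
  have ln2: "0 < ln (2::real)" by simp
  have lnN: "0 \<le> ln (real N)" using assms by simp
  show ?thesis
  proof (cases "real v * ln 2 \<ge> 2 * ln (real N)")
    case True
    hence "L \<ge> real v * ln 2 / 2" using L2 by simp
    hence "real v / L \<le> 2 / ln 2" using L1 ln2 by (simp add: field_simps)
    also have "\<dots> \<le> 2 / ln 2 * (1 + ln (real N))" using lnN ln2 by (simp add: field_simps)
    finally show ?thesis unfolding L_def .
  next
    case False
    hence v: "real v \<le> 2 * ln (real N) / ln 2" using ln2 by (simp add: field_simps)
    have "real v / L \<le> real v" using L1 by (simp add: divide_le_eq mult_le_cancel_left1)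
    also have "\<dots> \<le> 2 / ln 2 * (1 + ln (real N))" using v ln2 lnN by (simp add: field_simps)
    finally show ?thesis unfolding L_def .
  qed
qed

lemma dcube_disj:
  assumes "y \<in> dcube k m" "y \<in> dcube k m'" shows "m = m'"
proof -
  have "m $ i = m' $ i" for i
  proof -
    have "m $ i = \<lfloor>2 powr k * y $ i\<rfloor>" using assms(1) unfolding dcube_def
      by (intro floor_unique[symmetric]) auto
    moreover have "m' $ i = \<lfloor>2 powr k * y $ i\<rfloor>" using assms(2) unfolding dcube_def
      by (intro floor_unique[symmetric]) auto
    ultimately show ?thesis by simp
  qed
  thus ?thesis by (simp add: vec_eq_iff)
qed

lemma dcube_diam:
  fixes x y :: "real^'n"
  assumes "x \<in> dcube (int v) m" "y \<in> dcube (int v) m"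
  shows "norm (x - y) \<le> real CARD('n) * 2 powr (- real v)"
proof -
  have c: "\<bar>x $ i - y $ i\<bar> \<le> 2 powr (- real v)" for i
  proof -
    have "\<bar>2 powr real v * x $ i - 2 powr real v * y $ i\<bar> \<le> 1"
      using assms unfolding dcube_def by (auto simp: abs_le_iff) (smt (verit))+
    hence "2 powr real v * \<bar>x $ i - y $ i\<bar> \<le> 1"
      by (simp add: abs_mult right_diff_distrib[symmetric])
    thus ?thesis by (simp add: powr_minus field_simps)
  qed
  have "norm (x - y) \<le> (\<Sum>i\<in>UNIV. \<bar>(x - y) $ i\<bar>)" by (rule norm_le_l1_cart)
  also have "\<dots> \<le> (\<Sum>i\<in>(UNIV::'n set). 2 powr (- real v))" using c by (intro sum_mono) simp
  also have "\<dots> = real CARD('n) * 2 powr (- real v)" by simp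
  finally show ?thesis .
qed

lemma dcube_sets: "dcube k m \<in> sets lebesgue"
proof -
  have "dcube k m \<in> sets borel" unfolding dcube_def by measurable
  thus ?thesis by auto
qed

lemma dcube_measure: "measure lebesgue (dcube k (m::int^'n)) = (2 powr (- real_of_int k)) ^ CARD('n)"
proof -
  define a :: "real^'n" where "a = (\<chi> i. m$i / 2 powr k)"
  define b :: "real^'n" where "b = (\<chi> i. (m$i + 1) / 2 powr k)"
  have ab: "a $ i \<le> b $ i" for i unfolding a_def b_def by (simp add: divide_right_mono)
  have sub1: "box a b \<subseteq> dcube k m"
    unfolding dcube_def a_def b_def by (auto simp: mem_box_cart field_simps less_imp_le)
  have sub2: "dcube k m \<subseteq> cbox a b"
    unfolding dcube_def a_def b_def by (auto simp: mem_box_cart field_simps less_imp_le)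
  have ne: "cbox a b \<noteq> {}" proof -
    have "a \<in> cbox a b" using ab by (auto simp: mem_box_cart)
    thus ?thesis by blast
  qed  
  have cb: "measure lebesgue (cbox a b) = (2 powr (- real_of_int k)) ^ CARD('n)"
  proof -
    have "measure lebesgue (cbox a b) = measure lborel (cbox a b)" by simp
    also have "\<dots> = (\<Prod>i\<in>UNIV. b$i - a$i)" using ne by (rule content_cbox_cart)
    also have "\<dots> = (\<Prod>i\<in>(UNIV::'n set). 2 powr (- real_of_int k))"
      by (intro prod.cong) (auto simp: a_def b_def powr_minus field_simps)
    finally show ?thesis by simp
  qed
  have bx: "measure lebesgue (box a b) = measure lebesgue (cbox a b)"
  proof -
    have "\<forall>e\<in>Basis. a \<bullet> e \<le> b \<bullet> e" using ab by (auto simp: Basis_vec_def cart_eq_inner_axis)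
    moreover have "box a b \<in> sets lborel" "cbox a b \<in> sets lborel" by auto
    ultimately show ?thesis
      by (simp add: measure_lborel_box_eq measure_lborel_cbox_eq)
  qed
  have "measure lebesgue (box a b) \<le> measure lebesgue (dcube k m)"
    using sub1 sub2 dcube_sets[of k m]
    by (intro measure_mono_fmeasurable) (auto intro: fmeasurableI2[OF lmeasurable_cbox])
  moreover have "measure lebesgue (dcube k m) \<le> measure lebesgue (cbox a b)"
    using sub2 dcube_sets[of k m] by (intro measure_mono_fmeasurable) auto
  ultimately show ?thesis using bx cb by simp
qed

lemma ess_inf_pos:
  fixes g :: "real^'n \<Rightarrow> real"
  assumes "ess_inf g > 0" shows "\<exists>r>0. AE x in lebesgue. r \<le> g x"
proof -
  have "AE x in lebesgue. - ereal (g x) \<le> esssup lebesgue (\<lambda>x. - ereal (g x))" by (rule esssup_AE)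
  hence ae: "AE x in lebesgue. ess_inf g \<le> ereal (g x)"
    unfolding ess_inf_def by eventually_elim (simp add: ereal_uminus_le_reorder)
  obtain z where z: "0 < ereal z" "ereal z < ess_inf g" using ereal_dense2[OF assms] by blast
  from ae have "AE x in lebesgue. z \<le> g x" by eventually_elim (metis z(2) ereal_less_eq(3) less_imp_le order.trans)
  with z show ?thesis by auto
qed

lemma C_log_loc_dcube:
  fixes g :: "real^'n \<Rightarrow> real"
  assumes "C_log_loc g"
  shows "\<exists>c\<ge>0. \<forall>v (m::int^'n) x y. x \<in> dcube (int v) m \<longrightarrow> y \<in> dcube (int v) m \<longrightarrow> real v * \<bar>g x - g y\<bar> \<le> c"
proof -
  obtain c where c: "\<And>x y. x \<noteq> y \<Longrightarrow> \<bar>g x - g y\<bar> \<le> c / ln (exp 1 + 1 / norm (x - y))"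
    using assms unfolding C_log_loc_def by blast
  define Kd where "Kd = 2 / ln 2 * (1 + ln (real CARD('n)))"
  have Kd0: "0 \<le> Kd" unfolding Kd_def by simp
  show ?thesis
  proof (intro exI[of _ "max c 0 * Kd"] conjI allI impI)
    show "0 \<le> max c 0 * Kd" using Kd0 by simp
    fix v and m :: "int^'n" and x y assume xy: "x \<in> dcube (int v) m" "y \<in> dcube (int v) m"
    show "real v * \<bar>g x - g y\<bar> \<le> max c 0 * Kd"
    proof (cases "x = y")
      case True then show ?thesis using Kd0 by simp
    next
      case False
      define L where "L = ln (exp 1 + 1 / norm (x - y))"
      have L0: "0 < L" unfolding L_def using False by (intro ln_gt_zero) (smt (verit) one_less_exp_iff zero_le_divide_1_iff norm_ge_zero)
      have "\<bar>g x - g y\<bar> \<le> max c 0 / L" using c[OF False] L0 unfolding L_def[symmetric]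
        by (smt (verit) divide_right_mono)
      hence "real v * \<bar>g x - g y\<bar> \<le> real v * (max c 0 / L)" by (intro mult_left_mono) auto
      also have "\<dots> = max c 0 * (real v / L)" by simp
      also have "\<dots> \<le> max c 0 * Kd"
      proof (intro mult_left_mono)
        show "real v / L \<le> Kd" unfolding L_def Kd_def
          using False dcube_diam[OF xy] by (intro log_bound) auto
      qed simp
      finally show ?thesis .
    qed
  qed
qed

lemma Lp_indicator_lower:
  fixes p :: "real^'n \<Rightarrow> real" and P :: "(real^'n) set"
  assumes rp: "0 < rp" "AE y in lebesgue. rp \<le> p y"
    and P: "P \<in> sets lebesgue" "0 < measure lebesgue P"
  shows "ennreal (min 1 (measure lebesgue P powr (1/rp))) \<le> Lp_var_norm p (indicator P :: real^'n \<Rightarrow> real)"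
  unfolding Lp_var_norm_def
proof (rule Inf_greatest)
  fix z assume "z \<in> {ennreal l |l. 0 < l \<and> (\<integral>\<^sup>+ x. ennreal ((norm (indicator P x :: real) / l) powr p x) \<partial>lebesgue) \<le> 1}"
  then obtain l where z: "z = ennreal l" and l: "0 < l"
    and int: "(\<integral>\<^sup>+ x. ennreal ((norm (indicator P x :: real) / l) powr p x) \<partial>lebesgue) \<le> 1" by blast
  define MP where "MP = measure lebesgue P"
  have MP0: "0 < MP" using P unfolding MP_def by simp
  have em: "emeasure lebesgue P = ennreal MP"
    unfolding MP_def using P(2) by (intro emeasure_eq_ennreal_measure) (metis measure_zero_top less_irrefl)
  show "ennreal (min 1 (measure lebesgue P powr (1/rp))) \<le> z"
  proof (rule ccontr)
    assume "\<not> ?thesis"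
    hence ll: "l < 1" "l < MP powr (1/rp)" unfolding z MP_def using l
      by (auto simp: ennreal_le_iff not_le ennreal_less_iff min_less_iff_disj)
    have lrp: "l powr rp < MP"
    proof -
      have "l powr rp < (MP powr (1/rp)) powr rp" using ll l rp by (intro powr_less_mono2) auto
      also have "\<dots> = MP" using rp MP0 by (simp add: powr_powr)
      finally show ?thesis .
    qed
    have "ennreal ((1/l) powr rp) * ennreal MP = (\<integral>\<^sup>+ y. ennreal ((1/l) powr rp) * indicator P y \<partial>lebesgue)"
      using P(1) em by (simp add: nn_integral_cmult_indicator)
    also have "\<dots> \<le> (\<integral>\<^sup>+ x. ennreal ((norm (indicator P x :: real) / l) powr p x) \<partial>lebesgue)"
    proof (rule nn_integral_mono_AE)
      show "AE y in lebesgue. ennreal ((1/l) powr rp) * indicator P y \<le> ennreal ((norm (indicator P y :: real) / l) powr p y)"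
        using rp(2)
      proof eventually_elim
        case (elim y)
        show ?case
        proof (cases "y \<in> P")
          case True
          have "(1/l) powr rp \<le> (1/l) powr p y" using elim ll l by (intro powr_mono) auto
          thus ?thesis using True by (simp add: ennreal_leI)
        qed simp
      qed
    qed
    also have "\<dots> \<le> 1" by (rule int)
    finally have "(1/l) powr rp * MP \<le> 1" by (simp add: ennreal_mult'[symmetric] ennreal_le_1)
    moreover have "(1/l) powr rp * MP > 1"
      using lrp l by (simp add: powr_divide field_simps)
    ultimately show False by simp
  qed
qed

theorem lemma3p9:
  fixes \<alpha> \<tau> p q :: "real^'n \<Rightarrow> real"
  assumes "C_log_loc \<alpha>" and "C_log_loc \<tau>" and "ess_inf \<tau> \<ge> 0"
    and "P0_log p" and "P0_log q"
    and "0 < ess_sup q" and "ess_sup q < \<infinity>"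
  shows "\<exists>c>0. \<forall>lam \<in> b_space \<alpha> \<tau> p q. \<forall>(v::nat) (m::int^'n) x. x \<in> dcube (int v) m \<longrightarrow>
           cmod (lam v m) \<le> c * 2 powr (- real v * (\<alpha> x + real CARD('n) / 2))
             * measure lebesgue (dcube (int v) m) powr (\<tau> x)
             * enn2real (b_norm \<alpha> \<tau> p q lam)
             / enn2real (Lp_var_norm p (indicator (dcube (int v) m) :: real^'n \<Rightarrow> real))"
proof -
  obtain Ca where Ca: "Ca \<ge> 0" "\<And>v (m::int^'n) x y. x \<in> dcube (int v) m \<Longrightarrow> y \<in> dcube (int v) m \<Longrightarrow> real v * \<bar>\<alpha> x - \<alpha> y\<bar> \<le> Ca"
    using C_log_loc_dcube[OF assms(1)] by blast
  obtain Ct where Ct: "Ct \<ge> 0" "\<And>v (m::int^'n) x y. x \<in> dcube (int v) m \<Longrightarrow> y \<in> dcube (int v) m \<Longrightarrow> real v * \<bar>\<tau> x - \<tau> y\<bar> \<le> Ct"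
    using C_log_loc_dcube[OF assms(2)] by blast
  obtain rp where rp: "0 < rp" "AE y in lebesgue. rp \<le> p y"
    using ess_inf_pos[of p] assms(4) unfolding P0_log_def P0_def by blast
  obtain rq where rq: "0 < rq" "AE y in lebesgue. rq \<le> q y"
    using ess_inf_pos[of q] assms(5) unfolding P0_log_def P0_def by blast
  have ppos: "\<And>y. 0 < p y" using assms(4) unfolding P0_log_def P0_def by blast
  have qpos: "\<And>y. 0 < q y" using assms(5) unfolding P0_log_def P0_def by blast
  define c0 where "c0 = 2 powr (-(real CARD('n) * Ct + Ca))"
  define c where "c = 2 powr (1/rq) / c0"
  have c0pos: "0 < c0" unfolding c0_def by simp
  have cpos: "0 < c" unfolding c_def using c0pos by simp
  show ?thesis
  proof (intro exI[of _ c] conjI ballI allI impI)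
    show "0 < c" by (rule cpos)
    fix lam v m x assume lam: "lam \<in> b_space \<alpha> \<tau> p q" and x: "x \<in> dcube (int v) (m::int^'n)"
    define P where "P = dcube (int v) m"
    define MP where "MP = measure lebesgue P"
    have MP: "MP = 2 powr (- (real v * real CARD('n)))"
      unfolding MP_def P_def dcube_measure by (simp add: powr_power mult.commute)
    have MP0: "0 < MP" unfolding MP by simp
    have Pset: "P \<in> sets lebesgue" unfolding P_def by (rule dcube_sets)
    define B where "B = b_norm \<alpha> \<tau> p q lam"
    have Bfin: "B < \<infinity>" using lam unfolding b_space_def B_def by simp
    define N where "N = Lp_var_norm p (indicator P :: real^'n \<Rightarrow> real)"
    define A where "A = c0 * 2 powr (real v * (\<alpha> x + real CARD('n)/2)) * MP powr (- \<tau> x)"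
    have A0: "A > 0" unfolding A_def using c0pos MP0 by simp
    define F where "F = (\<lambda>w y. if nat (int v) \<le> w then
         complex_of_real (measure lebesgue (dcube (int v) m) powr (- \<tau> y) * indicator (dcube (int v) m) y) *
         (\<Sum>\<^sub>\<infinity> m'. complex_of_real (2 powr (real w * (\<alpha> y + real CARD('n) / 2)) *
                indicator (dcube (int w) m') y) * lam w m')
       else 0)"
    have lqB: "lq_Lp_norm p q F \<le> B"
      unfolding B_def b_norm_def F_def
      by (rule SUP_upper2[where i="(int v, m)"]) auto
    have Fv: "norm (F v y) = MP powr (- \<tau> y) * 2 powr (real v * (\<alpha> y + real CARD('n)/2)) * cmod (lam v m)"
      if y: "y \<in> P" for y
    proof -
      have "(\<Sum>\<^sub>\<infinity> m'. complex_of_real (2 powr (real v * (\<alpha> y + real CARD('n) / 2)) *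
                indicator (dcube (int v) m') y) * lam v m')
          = (\<Sum>\<^sub>\<infinity> m'\<in>{m}. complex_of_real (2 powr (real v * (\<alpha> y + real CARD('n) / 2)) *
                indicator (dcube (int v) m') y) * lam v m')"
      proof (rule infsum_cong_neutral)
        fix m' :: "int^'n" assume "m' \<in> UNIV - {m}"
        hence "y \<notin> dcube (int v) m'" using y dcube_disj[of y "int v" m m'] unfolding P_def by blast
        thus "complex_of_real (2 powr (real v * (\<alpha> y + real CARD('n) / 2)) *
                indicator (dcube (int v) m') y) * lam v m' = 0" by simp
      qed auto
      also have "\<dots> = complex_of_real (2 powr (real v * (\<alpha> y + real CARD('n) / 2))) * lam v m"
        using y unfolding P_def by simp
      finally have I: "(\<Sum>\<^sub>\<infinity> m'. complex_of_real (2 powr (real v * (\<alpha> y + real CARD('n) / 2)) *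
                indicator (dcube (int v) m') y) * lam v m') = complex_of_real (2 powr (real v * (\<alpha> y + real CARD('n) / 2))) * lam v m" .
      have "F v y = complex_of_real (MP powr (- \<tau> y) * indicator P y) * (\<Sum>\<^sub>\<infinity> m'. complex_of_real (2 powr (real v * (\<alpha> y + real CARD('n) / 2)) *
                indicator (dcube (int v) m') y) * lam v m')"
        unfolding F_def MP_def P_def by (simp only: nat_int order_refl if_True)
      also have "\<dots> = complex_of_real (MP powr (- \<tau> y)) * (complex_of_real (2 powr (real v * (\<alpha> y + real CARD('n) / 2))) * lam v m)"
        unfolding I using y by simp
      finally show ?thesis by (simp add: norm_mult)
    qed
    have Fv0: "F v y = 0" if "y \<notin> P" for y using that unfolding F_def P_def by simp
    have Ay: "A \<le> MP powr (- \<tau> y) * 2 powr (real v * (\<alpha> y + real CARD('n)/2))" if y: "y \<in> P" for y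
    proof -
      have h1: "real v * \<bar>\<alpha> x - \<alpha> y\<bar> \<le> Ca" using Ca(2)[OF x] y unfolding P_def by blast
      have h2: "real v * \<bar>\<tau> x - \<tau> y\<bar> \<le> Ct" using Ct(2)[OF x] y unfolding P_def by blast
      have h3: "real CARD('n) * (real v * \<bar>\<tau> x - \<tau> y\<bar>) \<le> real CARD('n) * Ct"
        using h2 by (intro mult_left_mono) auto
      have e1: "real v * (\<alpha> x - \<alpha> y) \<le> Ca" using h1
        by (smt (verit) abs_ge_self mult_left_mono of_nat_0_le_iff)
      have e2: "real CARD('n) * (real v * (\<tau> x - \<tau> y)) \<le> real CARD('n) * Ct" using h3
        by (smt (verit) abs_ge_self mult_left_mono of_nat_0_le_iff)
      have "A = 2 powr (-(real CARD('n) * Ct + Ca) + real v * (\<alpha> x + real CARD('n)/2) + real v * real CARD('n) * \<tau> x)"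
        unfolding A_def c0_def MP by (simp add: powr_powr powr_add)
      also have "\<dots> \<le> 2 powr (real v * real CARD('n) * \<tau> y + real v * (\<alpha> y + real CARD('n)/2))"
        using e1 e2 by (intro powr_mono) (auto simp: algebra_simps)
      also have "\<dots> = MP powr (- \<tau> y) * 2 powr (real v * (\<alpha> y + real CARD('n)/2))"
        unfolding MP by (simp add: powr_powr powr_add)
      finally show ?thesis .
    qed
    have goal_eq: "measure lebesgue (dcube (int v) m) = MP" "enn2real (b_norm \<alpha> \<tau> p q lam) = enn2real B"
      "Lp_var_norm p (indicator (dcube (int v) m) :: real^'n \<Rightarrow> real) = N"
      unfolding MP_def P_def B_def N_def by auto
    have main: "cmod (lam v m) \<le> c * 2 powr (- real v * (\<alpha> x + real CARD('n) / 2))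
             * MP powr (\<tau> x) * enn2real B / enn2real N"
    proof (cases "lam v m = 0")
      case True
      thus ?thesis using cpos by (auto intro!: divide_nonneg_nonneg mult_nonneg_nonneg)
    next
      case False
      define \<Lambda> where "\<Lambda> = cmod (lam v m)"
      have L0: "0 < \<Lambda>" using False unfolding \<Lambda>_def by simp
      define l0 where "l0 \<mu> = 2 powr (1/rq) * \<mu> / (\<Lambda> * A)" for \<mu>
      define S where "S \<mu> w = {ennreal l | l. 0 < l \<and> (\<integral>\<^sup>+ y. ennreal ((norm (F w y) / (\<mu> * l powr (1 / q y))) powr p y) \<partial>lebesgue) \<le> 1}" for \<mu> w
      define Adm where "Adm \<mu> \<longleftrightarrow> 0 < \<mu> \<and> (\<Sum>w. Inf (S \<mu> w)) \<le> 1" for \<mu>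
      have lqdef: "lq_Lp_norm p q F = Inf {ennreal \<mu> | \<mu>. Adm \<mu>}"
        unfolding lq_Lp_norm_def Adm_def S_def by simp
      have key: "N \<le> ennreal (l0 \<mu>)" "0 < l0 \<mu>" if adm: "Adm \<mu>" for \<mu>
      proof -
        have mu: "0 < \<mu>" "(\<Sum>w. Inf (S \<mu> w)) \<le> 1" using adm unfolding Adm_def by auto
        show l0pos: "0 < l0 \<mu>" unfolding l0_def using mu L0 A0 by simp
        have "Inf (S \<mu> v) < 2"
          by (rule ennreal_suminf_lessD) (use mu(2) in \<open>simp add: order_le_less_trans\<close>)
        then obtain l where l: "0 < l" "ennreal l < 2"
          and int: "(\<integral>\<^sup>+ y. ennreal ((norm (F v y) / (\<mu> * l powr (1 / q y))) powr p y) \<partial>lebesgue) \<le> 1"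
          unfolding S_def Inf_less_iff by blast
        have l2: "l < 2" using l by (metis ennreal_less_iff ennreal_numeral less_le zero_le_numeral)
        have "(\<integral>\<^sup>+ y. ennreal ((norm (indicator P y :: real) / l0 \<mu>) powr p y) \<partial>lebesgue)
            \<le> (\<integral>\<^sup>+ y. ennreal ((norm (F v y) / (\<mu> * l powr (1 / q y))) powr p y) \<partial>lebesgue)"
        proof (rule nn_integral_mono_AE)
          show "AE y in lebesgue. ennreal ((norm (indicator P y :: real) / l0 \<mu>) powr p y)
              \<le> ennreal ((norm (F v y) / (\<mu> * l powr (1 / q y))) powr p y)"
            using rq(2)
          proof eventually_elim
            case (elim y)
            show ?case
            proof (cases "y \<in> P")
              case True
              have qy: "0 < q y" by (rule qpos)
              have "l powr (1 / q y) \<le> 2 powr (1 / q y)" using l l2 qy by (intro powr_mono2) auto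
              also have "\<dots> \<le> 2 powr (1 / rq)" using elim rq(1) qy
                by (intro powr_mono) (auto simp: divide_simps)
              finally have lq: "l powr (1 / q y) \<le> 2 powr (1 / rq)" .
              have "norm (indicator P y :: real) / l0 \<mu> = \<Lambda> * A / (\<mu> * 2 powr (1 / rq))"
                using True L0 A0 mu unfolding l0_def by (simp add: field_simps)
              also have "\<dots> \<le> \<Lambda> * (MP powr (- \<tau> y) * 2 powr (real v * (\<alpha> y + real CARD('n)/2))) / (\<mu> * l powr (1 / q y))"
                using Ay[OF True] L0 A0 mu l lq
                by (intro frac_le mult_left_mono) (auto intro: mult_left_mono)
              also have "\<dots> = norm (F v y) / (\<mu> * l powr (1 / q y))"
                unfolding Fv[OF True] \<Lambda>_def by (simp add: mult_ac)
              finally have "norm (indicator P y :: real) / l0 \<mu> \<le> norm (F v y) / (\<mu> * l powr (1 / q y))" .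
              hence "(norm (indicator P y :: real) / l0 \<mu>) powr p y \<le> (norm (F v y) / (\<mu> * l powr (1 / q y))) powr p y"
                using ppos[of y] l0pos by (intro powr_mono2) auto
              thus ?thesis by (rule ennreal_leI)
            qed simp
          qed
        qed
        also have "\<dots> \<le> 1" by (rule int)
        finally have "(\<integral>\<^sup>+ y. ennreal ((norm (indicator P y :: real) / l0 \<mu>) powr p y) \<partial>lebesgue) \<le> 1" .
        thus "N \<le> ennreal (l0 \<mu>)" unfolding N_def Lp_var_norm_def
          using l0pos by (intro Inf_lower) blast
      qed
      have low: "ennreal (min 1 (MP powr (1/rp))) \<le> N"
        unfolding N_def MP_def using Pset MP0 unfolding MP_def by (intro Lp_indicator_lower rp) auto
      obtain \<mu>0 where mu0: "Adm \<mu>0"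
      proof -
        have "Inf {ennreal \<mu> | \<mu>. Adm \<mu>} < top" using lqB Bfin lqdef by simp
        then show ?thesis using that unfolding Inf_less_iff by blast
      qed
      have Nfin: "N \<noteq> top" using key(1)[OF mu0] by (metis ennreal_neq_top neq_top_trans)
      define Nr where "Nr = enn2real N"
      have NNr: "N = ennreal Nr" unfolding Nr_def using Nfin by (simp add: less_top[symmetric])
      have Nr0: "0 < Nr"
      proof -
        have "0 < min 1 (MP powr (1/rp))" using MP0 by simp
        moreover have "0 \<le> Nr" unfolding Nr_def by simp
        moreover have "min 1 (MP powr (1/rp)) \<le> Nr" using low ennreal_le_iff[OF \<open>0 \<le> Nr\<close>] unfolding NNr by blast
        ultimately show ?thesis by linarith
      qed
      have bound: "\<Lambda> * A * Nr / 2 powr (1/rq) \<le> \<mu>" if "Adm \<mu>" for \<mu>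
      proof -
        have "Nr \<le> l0 \<mu>" using key[OF that] unfolding NNr by (simp add: ennreal_le_iff)
        thus ?thesis unfolding l0_def using L0 A0 by (simp add: field_simps)
      qed
      have "ennreal (\<Lambda> * A * Nr / 2 powr (1/rq)) \<le> lq_Lp_norm p q F"
        unfolding lqdef by (rule Inf_greatest) (auto intro!: ennreal_leI bound)
      also have "\<dots> \<le> B" by (rule lqB)
      also have "B = ennreal (enn2real B)" using Bfin by simp
      finally have "\<Lambda> * A * Nr / 2 powr (1/rq) \<le> enn2real B" by (simp add: ennreal_le_iff)
      hence "\<Lambda> \<le> 2 powr (1/rq) * enn2real B / (A * Nr)"
        using A0 Nr0 by (simp add: field_simps)
      also have "\<dots> = c * 2 powr (- real v * (\<alpha> x + real CARD('n) / 2)) * MP powr \<tau> x * enn2real B / Nr"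
      proof -
        have e1: "2 powr (- real v * (\<alpha> x + real CARD('n) / 2)) = inverse (2 powr (real v * (\<alpha> x + real CARD('n) / 2)))"
          by (simp add: powr_minus[symmetric])
        have e2: "MP powr (- \<tau> x) = inverse (MP powr \<tau> x)" by (simp add: powr_minus)
        have p1: "0 < 2 powr (real v * (\<alpha> x + real CARD('n) / 2))" by simp
        have p2: "0 < MP powr \<tau> x" using MP0 by simp
        show ?thesis unfolding A_def c_def e1 e2 using c0pos p1 p2 Nr0
          by (simp add: field_simps)
      qed
      finally show ?thesis unfolding \<Lambda>_def Nr_def .
    qed
    thus "cmod (lam v m) \<le> c * 2 powr (- real v * (\<alpha> x + real CARD('n) / 2))
             * measure lebesgue (dcube (int v) m) powr (\<tau> x)
             * enn2real (b_norm \<alpha> \<tau> p q lam)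
             / enn2real (Lp_var_norm p (indicator (dcube (int v) m) :: real^'n \<Rightarrow> real))"
      unfolding goal_eq .
  qed
qed
end
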